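(* Let $m\in\{1,2\}$, $\gamma\in[2,3]$ and $z\in(0,z_M]$. Then the solution of $\frac{dC}{dV}=\frac{F(V,C;\gamma,z)}{G(V,C;\gamma,z)}$ on $[V_1,-\sqrt{2/\gamma}\,C_8(z))$ with $C(V_1)=C_1$ satisfies $C(V)>-\sqrt{\gamma/2}\,V$ for all $V\in(V_1,-\sqrt{2/\gamma}\,C_8(z))$ (and $C_1\ge-\sqrt{\gamma/2}V_1$ with equality only at $\gamma=2$).
   Context: Fix $m\in\{1,2\}$. For $z>0$ put $\lambda=1+m\gamma z$, $a_1=1+\frac{m(\gamma-1)}{2}$, $a_2=\frac{m(\gamma-1)+mz\gamma(\gamma-3)}{2}$, $a_3=\frac{mz\gamma(\gamma-1)}{2}$, $G(V,C;\gamma,z)=C^2[(m+1)V+2mz]-V(1+V)(\lambda+V)$, $F(V,C;\gamma,z)=C\{C^2[1+\frac{mz}{1+V}]-a_1(1+V)^2+a_2(1+V)-a_3\}$. $V_1=-\frac2{\gamma+1}$, $C_1=\frac{\sqrt{2\gamma(\gamma-1)}}{\gamma+1}$. $z_M=(\sqrt\gamma+\sqrt2)^{-2}$, $w(z)=\sqrt{1-2(\gamma+2)z+(\gamma-2)^2z^2}$, $V_8=\frac{-1+(\gamma-2)z+w}{2}$, $C_8=1+V_8$. *)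

theory Defs
  imports "HOL-Analysis.Analysis"
begin

(* m is the geometry parameter (m = 1 or 2), taken as a real number in formulas *)

definition lam :: "real \<Rightarrow> real \<Rightarrow> real \<Rightarrow> real" where
  "lam m \<gamma> z = 1 + m * \<gamma> * z"

definition a1 :: "real \<Rightarrow> real \<Rightarrow> real" where
  "a1 m \<gamma> = 1 + m * (\<gamma> - 1) / 2"

definition a2 :: "real \<Rightarrow> real \<Rightarrow> real \<Rightarrow> real" where
  "a2 m \<gamma> z = (m * (\<gamma> - 1) + m * z * \<gamma> * (\<gamma> - 3)) / 2"

definition a3 :: "real \<Rightarrow> real \<Rightarrow> real \<Rightarrow> real" where
  "a3 m \<gamma> z = m * z * \<gamma> * (\<gamma> - 1) / 2"

definition Gf :: "real \<Rightarrow> real \<Rightarrow> real \<Rightarrow> real \<Rightarrow> real \<Rightarrow> real" where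
  "Gf m V C \<gamma> z = C^2 * ((m + 1) * V + 2 * m * z) - V * (1 + V) * (lam m \<gamma> z + V)"

definition Ff :: "real \<Rightarrow> real \<Rightarrow> real \<Rightarrow> real \<Rightarrow> real \<Rightarrow> real" where
  "Ff m V C \<gamma> z = C * (C^2 * (1 + m * z / (1 + V)) - a1 m \<gamma> * (1 + V)^2
                        + a2 m \<gamma> z * (1 + V) - a3 m \<gamma> z)"

definition V1 :: "real \<Rightarrow> real" where
  "V1 \<gamma> = - 2 / (\<gamma> + 1)"

definition C1 :: "real \<Rightarrow> real" where
  "C1 \<gamma> = sqrt (2 * \<gamma> * (\<gamma> - 1)) / (\<gamma> + 1)"

definition zM :: "real \<Rightarrow> real" where
  "zM \<gamma> = 1 / (sqrt \<gamma> + sqrt 2)^2"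

definition wf :: "real \<Rightarrow> real \<Rightarrow> real" where
  "wf \<gamma> z = sqrt (1 - 2 * (\<gamma> + 2) * z + (\<gamma> - 2)^2 * z^2)"

definition V8 :: "real \<Rightarrow> real \<Rightarrow> real" where
  "V8 \<gamma> z = (-1 + (\<gamma> - 2) * z + wf \<gamma> z) / 2"

definition C8 :: "real \<Rightarrow> real \<Rightarrow> real" where
  "C8 \<gamma> z = 1 + V8 \<gamma> z"

definition is_sol :: "real \<Rightarrow> real \<Rightarrow> real \<Rightarrow> (real \<Rightarrow> real) \<Rightarrow> real \<Rightarrow> real \<Rightarrow> real \<Rightarrow> bool" where
  "is_sol m \<gamma> z C a b c0 \<longleftrightarrow> C a = c0 \<and>
     (\<forall>V \<in> {a..<b}. Gf m V (C V) \<gamma> z \<noteq> 0 \<and>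
        (C has_real_derivative (Ff m V (C V) \<gamma> z / Gf m V (C V) \<gamma> z)) (at V within {a..<b}))"

end

theory Submission imports Defs begin
lemma Qneg:
  fixes k c :: real
  assumes k: "1 \<le> k" "k \<le> 5/4" and c: "0 < c" "c < 1"
  shows "(k^3-2*k^5) + (k - k^2 - 5*k^3 + 4*k^4 + 2*k^5)*c + (-1+k+4*k^2-2*k^3-2*k^4)*c^2 \<le> 0"
proof -
  define t where "t = k - 1"
  have t: "0 \<le> t" "t \<le> 1/4" using k t_def by auto
  have kt: "k = 1 + t" using t_def by simp
  define A where "A = -1+k+4*k^2-2*k^3-2*k^4"
  define B where "B = k - k^2 - 5*k^3 + 4*k^4 + 2*k^5"
  have A: "A = -5*t-14*t^2-10*t^3-2*t^4" unfolding A_def kt by (simp add: algebra_simps power2_eq_square power3_eq_cube power4_eq_xxxx)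
  have BA: "B + 2*A = 1 + 11*t^3 + 10*t^4 + 2*t^5" unfolding A_def B_def kt
    by algebra
  have Q1: "(k^3-2*k^5) + B + A = t*(-2 -3*t + 2*t^2 + 2*t^3)" unfolding A_def B_def kt
    by algebra
  have pw: "t^2 \<ge> 0" "t^3 \<ge> 0" "t^4 \<ge> 0" "t^5 \<ge> 0" using t by simp_all
  have An: "A \<le> 0" unfolding A using t pw by linarith
  have BAp: "B + 2*A \<ge> 0" unfolding BA using t pw by linarith
  have "-2 -3*t + 2*t^2 + 2*t^3 \<le> 0"
  proof -
    have "t*t \<le> t*1" using t by (intro mult_left_mono) auto
    hence a: "t^2 \<le> 1/4" using t by (simp add: power2_eq_square)
    have "t*t^2 \<le> 1 * (1/4)" using t a by (intro mult_mono) auto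
    hence "t^3 \<le> 1/4" by (simp add: power3_eq_cube power2_eq_square)
    moreover note a
    ultimately show ?thesis using t by linarith
  qed
  hence Q1n: "(k^3-2*k^5) + B + A \<le> 0" unfolding Q1 using t by (simp add: mult_nonneg_nonpos)
  have "B + A*(c+1) \<ge> 0"
  proof -
    have "A*(c+1) \<ge> A*2" using An c by (simp add: mult_left_mono_neg)
    thus ?thesis using BAp by linarith
  qed
  hence "(c-1)*(B + A*(c+1)) \<le> 0" using c by (simp add: mult_nonpos_nonneg)
  moreover have "(k^3-2*k^5) + B*c + A*c^2 = ((k^3-2*k^5) + B + A) + (c-1)*(B + A*(c+1))"
    by (simp add: algebra_simps power2_eq_square)
  ultimately show ?thesis using Q1n unfolding A_def B_def by linarith
qed
lemma neg_of_mul: fixes x p :: real assumes "x*p \<le> 0" "p > 0" shows "x \<le> 0"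
  using assms by (simp add: mult_le_0_iff)

lemma Rb:
  fixes k c z :: real
  assumes k: "1 \<le> k" "k \<le> 5/4" and c: "k/(k+1) \<le> c" "c < 1" and z: "2*z*(k^2-(k^2-1)*c) = c*(1-c)"
  shows "(2*(2*k^2)-1)*(-c/k)^2 + (3*(2*k^2)-2-z*(2*k^2)*((2*k^2)-2))*(-c/k) + ((2*k^2)-1)+z*(2*k^2)*(3-(2*k^2)) \<le> 0"
proof -
  define D where "D = k^2-(k^2-1)*c"
  have "0 < k/(k+1)" using k by simp
  hence cpos: "0 < c" using c by linarith
  have k21: "(k^2-1)*c \<le> (k^2-1)*1" by (rule mult_left_mono) (use c k in auto)
  have L: "(k+1)*c - k \<ge> 0" using c k by (simp add: field_simps)
  have D: "D > 0" unfolding D_def using k21 by simp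
  have zD: "2*z*D = c*(1-c)" using z unfolding D_def .
  have e1: "((2*(2*k^2)-1)*(-c/k)^2 + (3*(2*k^2)-2-z*(2*k^2)*((2*k^2)-2))*(-c/k) + ((2*k^2)-1)+z*(2*k^2)*(3-(2*k^2))) * (k^2*D)
     = D*((4*k^2-1)*c^2 - (6*k^2-2)*c*k + k^2*(2*k^2-1)) + (2*z*D)*(2*k^3*(k^2-1)*c + k^4*(3-2*k^2))"
    using k by (simp add: field_simps power2_eq_square power4_eq_xxxx power3_eq_cube)
  have e2: "D*((4*k^2-1)*c^2 - (6*k^2-2)*c*k + k^2*(2*k^2-1)) + (c*(1-c))*(2*k^3*(k^2-1)*c + k^4*(3-2*k^2))
     = ((k+1)*c - k) * ((k^3-2*k^5) + (k - k^2 - 5*k^3 + 4*k^4 + 2*k^5)*c + (-1+k+4*k^2-2*k^3-2*k^4)*c^2)"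
    unfolding D_def by algebra
  have "((k+1)*c - k) * ((k^3-2*k^5) + (k - k^2 - 5*k^3 + 4*k^4 + 2*k^5)*c + (-1+k+4*k^2-2*k^3-2*k^4)*c^2) \<le> 0"
    using L Qneg[OF k cpos c(2)] by (simp add: mult_nonneg_nonpos)
  hence "((2*(2*k^2)-1)*(-c/k)^2 + (3*(2*k^2)-2-z*(2*k^2)*((2*k^2)-2))*(-c/k) + ((2*k^2)-1)+z*(2*k^2)*(3-(2*k^2))) * (k^2*D) \<le> 0"
    unfolding e1 zD e2 .
  moreover have "k^2*D > 0" using D k by simp
  ultimately show ?thesis by (rule neg_of_mul)
qed
lemma qb:
  fixes k c z m :: real
  assumes k: "1 \<le> k" and c: "k/(k+1) \<le> c" "c < 1" and m: "0 \<le> m" and z: "2*z*(k^2-(k^2-1)*c) = c*(1-c)"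
  shows "((m+1)*k^2-1)*(c/k)^2 + 2*(c/k) - (1+m*(2*k^2)*z) \<ge> 0"
proof -
  define D where "D = k^2-(k^2-1)*c"
  have "0 < k/(k+1)" using k by simp
  hence cpos: "0 < c" using c by linarith
  have k21: "(k^2-1)*c \<le> (k^2-1)*1" by (rule mult_left_mono) (use c k in auto)
  have L: "(k+1)*c - k \<ge> 0" using c k by (simp add: field_simps)
  have D: "D > 0" unfolding D_def using c k
    using k21 by simp
  have zz: "z = c*(1-c)/(2*D)" using z D unfolding D_def by (simp add: field_simps)
  have zD: "2*z*D = c*(1-c)" using z unfolding D_def .
  have e1: "(((m+1)*k^2-1)*(c/k)^2 + 2*(c/k) - (1+m*(2*k^2)*z)) * (k^2*D)
      = D*(((m+1)*k^2-1)*c^2 + 2*c*k - k^2) - m*k^4*(2*z*D)"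
    using k by (simp add: field_simps power2_eq_square power4_eq_xxxx)
  have eq: "(((m+1)*k^2-1)*(c/k)^2 + 2*(c/k) - (1+m*(2*k^2)*z)) * (k^2*D)
      = m*k^2*c*((k+1)*c-k)*(k-(k-1)*c) + D*((k+1)*c-k)*((k-1)*c+k)"
    unfolding e1 zD by (simp add: D_def algebra_simps power2_eq_square power4_eq_xxxx)
  have "m*k^2*c*((k+1)*c-k)*(k-(k-1)*c) \<ge> 0"
  proof -
    have "(k-1)*c \<le> (k-1)*1" by (rule mult_left_mono) (use c k in auto)
    hence "k-(k-1)*c \<ge> 0" by simp
    thus ?thesis using m cpos L by simp
  qed
  moreover have "D*((k+1)*c-k)*((k-1)*c+k) \<ge> 0" using D L k cpos by simp
  ultimately have "(((m+1)*k^2-1)*(c/k)^2 + 2*(c/k) - (1+m*(2*k^2)*z)) * (k^2*D) \<ge> 0" using eq by linarith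
  moreover have "k^2*D > 0" using D k by simp
  ultimately show ?thesis by (simp add: zero_le_mult_iff)
qed
lemma cfacts:
  fixes \<gamma> z k :: real
  assumes g: "2 \<le> \<gamma>" "\<gamma> \<le> 3" and z: "0 < z" "z \<le> zM \<gamma>" and kdef: "k = sqrt (\<gamma>/2)"
  shows "1 \<le> k" "k \<le> 5/4" "\<gamma> = 2*k^2" "sqrt (2/\<gamma>) = 1/k" "sqrt (\<gamma>/2) = k"
    "k/(k+1) \<le> C8 \<gamma> z" "C8 \<gamma> z < 1" "2*z*(k^2-(k^2-1)*C8 \<gamma> z) = C8 \<gamma> z*(1-C8 \<gamma> z)"
    "z \<le> 1/8"
proof -
  show k1: "1 \<le> k" unfolding kdef using g by simp
  show gk: "\<gamma> = 2*k^2" unfolding kdef using g by simp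
  have "k^2 \<le> (5/4)^2" using gk g by (simp add: power2_eq_square)
  thus "k \<le> 5/4" by (rule power2_le_imp_le) simp
  show "sqrt (\<gamma>/2) = k" using kdef by simp
  show "sqrt (2/\<gamma>) = 1/k" unfolding kdef by (simp add: real_sqrt_divide)
  have sg: "sqrt \<gamma> = sqrt 2 * k" unfolding kdef by (simp add: real_sqrt_divide)
  have zM: "zM \<gamma> = 1/(2*(k+1)^2)" unfolding zM_def sg
    by (simp add: power2_eq_square algebra_simps)
  have zle: "2*(k+1)^2*z \<le> 1" using z zM k1 by (simp add: field_simps)
  have "(2::real)^2 \<le> (k+1)^2" using k1 by (intro power_mono) auto
  hence "2*2^2*z \<le> 2*(k+1)^2*z" using z by (intro mult_right_mono) auto
  hence "8*z \<le> 2*(k+1)^2*z" by simp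
  thus "z \<le> 1/8" using zle by linarith
  define d where "d = 1 - 2*(\<gamma>+2)*z + (\<gamma>-2)^2*z^2"
  have dfac: "d = (1 - 2*(k+1)^2*z)*(1-2*(k-1)^2*z)" unfolding d_def gk by algebra
  have "(k-1)^2 \<le> (k+1)^2" using k1 by (intro power_mono) auto
  hence "2*(k-1)^2*z \<le> 2*(k+1)^2*z" using z by (intro mult_right_mono) auto
  hence d0: "d \<ge> 0" unfolding dfac using zle by simp
  define w where "w = wf \<gamma> z"
  have w: "w = sqrt d" unfolding w_def wf_def d_def ..
  have w0: "w \<ge> 0" and w2: "w^2 = d" using d0 w by auto
  define s where "s = 1 + (\<gamma>-2)*z"
  define c where "c = C8 \<gamma> z"
  have c: "c = (s + w)/2" unfolding c_def C8_def V8_def w_def s_def by (simp add: field_simps)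
  have p: "c^2 - s*c + \<gamma>*z = 0"
  proof -
    have "2*c - s = w" using c by simp
    hence "(2*c - s)^2 = d" using w2 by simp
    thus ?thesis unfolding d_def s_def by (simp add: algebra_simps power2_eq_square)
  qed
  have "2*z*(k^2-(k^2-1)*c) = c*(1-c)"
    using p unfolding s_def gk by (simp add: algebra_simps power2_eq_square)
  thus "2*z*(k^2-(k^2-1)*C8 \<gamma> z) = C8 \<gamma> z*(1-C8 \<gamma> z)" unfolding c_def .
  have "(\<gamma>-2)*z \<le> 1*(1/8)" using g z \<open>z \<le> 1/8\<close> by (intro mult_mono) auto
  hence s2: "2 - s > 0" unfolding s_def by simp
  have "(2-s)^2 - d = 8*z" unfolding s_def d_def by (simp add: algebra_simps power2_eq_square)
  hence "w^2 < (2-s)^2" using w2 z by simp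
  hence "w < 2 - s" using s2 by (intro power_less_imp_less_base[of w 2]) auto
  thus "C8 \<gamma> z < 1" using c unfolding c_def by simp
  define cM where "cM = k/(k+1)"
  define c' where "c' = (s-w)/2"
  have sw: "s^2 - w^2 = 4*\<gamma>*z" using w2 unfolding d_def s_def by (simp add: algebra_simps power2_eq_square)
  have pf0: "(cM - c)*(cM - c') = cM^2 - s*cM + (s^2-w^2)/4" unfolding c c'_def
    by (simp add: field_simps power2_eq_square)
  have pf: "cM^2 - s*cM + \<gamma>*z = (cM - c)*(cM - c')" unfolding pf0 sw by simp
  have cMe: "cM*(k+1) = k" unfolding cM_def using k1 by simp
  have "(cM^2 - s*cM + \<gamma>*z)*(k+1)^2 = (cM*(k+1))^2 - s*(cM*(k+1))*(k+1) + \<gamma>*z*(k+1)^2" by algebra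
  also have "\<dots> = k^2 - s*k*(k+1) + \<gamma>*z*(k+1)^2" unfolding cMe ..
  also have "\<dots> = k*(2*(k+1)^2*z - 1)" unfolding s_def gk by algebra
  also have "\<dots> \<le> 0" using zle k1 by (simp add: mult_nonneg_nonpos)
  finally have "(cM^2 - s*cM + \<gamma>*z)*(k+1)^2 \<le> 0" .
  hence "cM^2 - s*cM + \<gamma>*z \<le> 0" using k1 by (simp add: mult_le_0_iff)
  hence "(cM - c)*(cM - c') \<le> 0" using pf by simp
  moreover have "c' \<le> c" unfolding c c'_def using w0 by simp
  ultimately have "cM \<le> c"
  proof -
    assume a: "(cM - c)*(cM - c') \<le> 0" "c' \<le> c"
    show ?thesis
    proof (rule ccontr)
      assume "\<not> cM \<le> c"
      hence "(cM-c)*(cM-c') > 0" using a by (intro mult_pos_pos) auto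
      thus False using a by linarith
    qed
  qed
  thus "k/(k+1) \<le> C8 \<gamma> z" unfolding cM_def c_def .
qed
lemma G_line:
  assumes "\<gamma> = 2*k^2"
  shows "Gf m V (-k*V) \<gamma> z = V*(((m+1)*k^2-1)*V^2 - 2*V - (1+m*\<gamma>*z))"
  using assms unfolding Gf_def lam_def by (simp add: power2_eq_square algebra_simps)

definition Rf :: "real \<Rightarrow> real \<Rightarrow> real \<Rightarrow> real" where
  "Rf \<gamma> z V = (2*\<gamma>-1)*V^2 + (3*\<gamma>-2-z*\<gamma>*(\<gamma>-2))*V + (\<gamma>-1)+z*\<gamma>*(3-\<gamma>)"

lemma F_line:
  assumes "\<gamma> = 2*k^2" "1 + V \<noteq> 0"
  shows "Ff m V (-k*V) \<gamma> z + k * Gf m V (-k*V) \<gamma> z = k*m*V^2*Rf \<gamma> z V/(2*(1+V))"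
  using assms unfolding Gf_def Ff_def lam_def a1_def a2_def a3_def Rf_def
  by (simp add: field_simps power2_eq_square)

lemma RV1:
  fixes \<gamma> z :: real
  assumes g: "2 \<le> \<gamma>" "\<gamma> \<le> 3" and z: "0 < z" "z \<le> 1/8"
  shows "Rf \<gamma> z (-2/(\<gamma>+1)) < 0"
proof -
  have e: "Rf \<gamma> z (-2/(\<gamma>+1)) * (\<gamma>+1)^2 = (\<gamma>^2-4*\<gamma>+1)*((\<gamma>-1) - z*\<gamma>*(\<gamma>+1))"
  proof -
    define u where "u = \<gamma>+1"
    have "\<gamma>+1 \<noteq> 0" using g by simp
    hence ue: "(-2/(\<gamma>+1))*u = -2" unfolding u_def by (simp add: field_simps)
    have "Rf \<gamma> z (-2/(\<gamma>+1)) * (\<gamma>+1)^2 = (2*\<gamma>-1)*((-2/(\<gamma>+1))*u)^2 + (3*\<gamma>-2-z*\<gamma>*(\<gamma>-2))*((-2/(\<gamma>+1))*u)*u + ((\<gamma>-1)+z*\<gamma>*(3-\<gamma>))*u^2"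
      unfolding Rf_def u_def by algebra
    also have "\<dots> = (2*\<gamma>-1)*4 + (3*\<gamma>-2-z*\<gamma>*(\<gamma>-2))*(-2)*u + ((\<gamma>-1)+z*\<gamma>*(3-\<gamma>))*u^2"
      unfolding ue by simp
    also have "\<dots> = (\<gamma>^2-4*\<gamma>+1)*((\<gamma>-1) - z*\<gamma>*(\<gamma>+1))" unfolding u_def by algebra
    finally show ?thesis .
  qed
  have "(\<gamma>-2)^2 \<le> 1^2" using g by (intro power_mono) auto
  hence n1: "\<gamma>^2-4*\<gamma>+1 < 0" by (simp add: power2_eq_square algebra_simps)
  have "z*(\<gamma>*(\<gamma>+1)) \<le> (1/8)*(\<gamma>*(\<gamma>+1))" using z g by (intro mult_right_mono) auto
  moreover have "(1/8)*(\<gamma>*(\<gamma>+1)) < \<gamma> - 1"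
  proof -
    have "(\<gamma>-2)*(\<gamma>-3) \<le> 0" using g by (simp add: mult_nonneg_nonpos)
    hence h: "\<gamma>*\<gamma> \<le> 5*\<gamma> - 6" by (simp add: algebra_simps)
    have "\<gamma> + \<gamma>*\<gamma> < 8*\<gamma> - 8" using h g by linarith
    hence h2: "\<gamma> + \<gamma>*\<gamma> < 8*\<gamma> - 8" .
    have "(1/8)*(\<gamma>*(\<gamma>+1)) = (1/8)*(\<gamma> + \<gamma>*\<gamma>)" by (simp add: algebra_simps)
    also have "\<dots> < (1/8)*(8*\<gamma> - 8)" using h2 by simp
    finally show ?thesis by simp
  qed
  ultimately have "z*(\<gamma>*(\<gamma>+1)) < \<gamma> - 1" by linarith
  hence p2: "(\<gamma>-1) - z*\<gamma>*(\<gamma>+1) > 0" by (simp add: mult.assoc)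
  have "Rf \<gamma> z (-2/(\<gamma>+1)) * (\<gamma>+1)^2 < 0" unfolding e using n1 p2 by (simp add: mult_neg_pos)
  moreover have "(\<gamma>+1)^2 > 0" using g by simp
  ultimately show ?thesis by (simp add: mult_less_0_iff)
qed

lemma keyline:
  fixes \<gamma> z k c m V :: real
  assumes g: "2 \<le> \<gamma>" "\<gamma> \<le> 3" and z: "0 < z" "z \<le> 1/8" and m: "1 \<le> m"
    and k: "1 \<le> k" "k \<le> 5/4" "\<gamma> = 2*k^2"
    and c: "k/(k+1) \<le> c" "c < 1" "2*z*(k^2-(k^2-1)*c) = c*(1-c)"
    and V: "-2/(\<gamma>+1) \<le> V" "V < -c/k"
  shows "Ff m V (-k*V) \<gamma> z / Gf m V (-k*V) \<gamma> z + k > 0"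
proof -
  define b where "b = -c/k"
  define a where "a = -2/(\<gamma>+1)"
  have "0 < k/(k+1)" using k by simp
  hence cpos: "0 < c" using c by linarith
  have b0: "b < 0" unfolding b_def using cpos k by simp
  have V0: "V < 0" using V b0 unfolding b_def by linarith
  have a1: "a > -1" unfolding a_def using g by (simp add: field_simps)
  have V1p: "1 + V > 0" using V a1 unfolding a_def by linarith
  define al where "al = (m+1)*k^2-1"
  have "1 \<le> k^2" using k(1) by (simp add: one_le_power)
  hence "1*1 \<le> (m+1)*k^2" using m by (intro mult_mono) auto
  hence al: "al \<ge> 0" unfolding al_def by simp
  define q where "q = (\<lambda>x. al*x^2 - 2*x - (1+m*\<gamma>*z))"
  have qb0: "q b \<ge> 0" unfolding q_def b_def al_def using qb[OF k(1) c(1) c(2) _ c(3), of m] m k(3)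
    by (simp add: power2_eq_square)
  have "q V - q b = (V - b)*(al*(V+b) - 2)" unfolding q_def by (simp add: algebra_simps power2_eq_square)
  moreover have "(V - b)*(al*(V+b) - 2) > 0"
  proof -
    have "al*(V+b) \<le> 0" using al V0 b0 by (simp add: mult_nonneg_nonpos)
    thus ?thesis using V unfolding b_def by (intro mult_neg_neg) auto
  qed
  ultimately have qV: "q V > 0" using qb0 by linarith
  have G: "Gf m V (-k*V) \<gamma> z < 0" unfolding G_line[OF k(3)] using qV V0
    unfolding q_def al_def by (simp add: mult_neg_pos)
  have Ra: "Rf \<gamma> z a < 0" unfolding a_def using RV1 g z by simp
  have Rb0: "Rf \<gamma> z b \<le> 0" unfolding b_def Rf_def k(3) using Rb[OF k(1) k(2) c] by simp
  have ab: "a < b" using V unfolding a_def b_def by linarith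
  have conv: "(b-a)*Rf \<gamma> z V = (b-V)*Rf \<gamma> z a + (V-a)*Rf \<gamma> z b + (2*\<gamma>-1)*(V-a)*(V-b)*(b-a)"
    unfolding Rf_def by (simp add: algebra_simps power2_eq_square)
  have t1: "(b-V)*Rf \<gamma> z a < 0" using Ra V unfolding b_def by (simp add: mult_pos_neg)
  have t2: "(V-a)*Rf \<gamma> z b \<le> 0" using Rb0 V unfolding a_def by (simp add: mult_nonneg_nonpos)
  have t3: "(2*\<gamma>-1)*(V-a)*(V-b)*(b-a) \<le> 0"
  proof -
    have "(2*\<gamma>-1)*(V-a) \<ge> 0" using g V unfolding a_def by simp
    moreover have "(V-b)*(b-a) \<le> 0" using V ab unfolding b_def by (simp add: mult_nonpos_nonneg)
    ultimately show ?thesis by (metis mult.assoc mult_nonneg_nonpos)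
  qed
  have "(b-a)*Rf \<gamma> z V < 0" using conv t1 t2 t3 by linarith
  hence RV: "Rf \<gamma> z V < 0" using ab by (simp add: mult_less_0_iff)
  have FG: "Ff m V (-k*V) \<gamma> z + k * Gf m V (-k*V) \<gamma> z < 0"
  proof -
    have "k*m*V^2 > 0" using k m V0 by simp
    hence "k*m*V^2*Rf \<gamma> z V < 0" using RV by (simp add: mult_pos_neg)
    moreover have eqF: "Ff m V (-k*V) \<gamma> z + k * Gf m V (-k*V) \<gamma> z = k*m*V^2*Rf \<gamma> z V/(2*(1+V))"
      using F_line[OF k(3), of V m z] V1p by simp
    ultimately show ?thesis using V1p by (simp add: divide_neg_pos)
  qed
  have "Ff m V (-k*V) \<gamma> z / Gf m V (-k*V) \<gamma> z + k = (Ff m V (-k*V) \<gamma> z + k * Gf m V (-k*V) \<gamma> z) / Gf m V (-k*V) \<gamma> z"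
    using G by (simp add: field_simps)
  also have "\<dots> > 0" using FG G by (simp add: divide_neg_neg)
  finally show ?thesis .
qed
theorem mainTheorem10:
  fixes m :: nat and \<gamma> z :: real and C :: "real \<Rightarrow> real"
  assumes "m \<in> {1, 2}" and "2 \<le> \<gamma>" and "\<gamma> \<le> 3" and "0 < z" and "z \<le> zM \<gamma>"
    and "is_sol (real m) \<gamma> z C (V1 \<gamma>) (- sqrt (2 / \<gamma>) * C8 \<gamma> z) (C1 \<gamma>)"
  shows "(\<forall>V \<in> {V1 \<gamma> <..< - sqrt (2 / \<gamma>) * C8 \<gamma> z}. C V > - sqrt (\<gamma> / 2) * V)
       \<and> C1 \<gamma> \<ge> - sqrt (\<gamma> / 2) * V1 \<gamma>
       \<and> (C1 \<gamma> = - sqrt (\<gamma> / 2) * V1 \<gamma> \<longleftrightarrow> \<gamma> = 2)"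
proof -
  note g = assms(2,3)
  note zz = assms(4,5)
  define k where "k = sqrt (\<gamma>/2)"
  note cf = cfacts[OF g zz k_def]
  have k1: "1 \<le> k" and k2: "k \<le> 5/4" and gk: "\<gamma> = 2*k^2" and s2g: "sqrt (2/\<gamma>) = 1/k"
    and sg2: "sqrt (\<gamma>/2) = k" and z8: "z \<le> 1/8" using cf by auto
  define c where "c = C8 \<gamma> z"
  have c1: "k/(k+1) \<le> c" and c2: "c < 1" and c3: "2*z*(k^2-(k^2-1)*c) = c*(1-c)"
    using cf unfolding c_def by auto
  have mm: "1 \<le> real m" using assms(1) by auto
  define a where "a = V1 \<gamma>"
  define b where "b = - sqrt (2 / \<gamma>) * C8 \<gamma> z"
  have bcd: "b = -c/k" unfolding b_def c_def s2g by simp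
  have ad: "a = -2/(\<gamma>+1)" unfolding a_def V1_def by simp
  have e1: "- sqrt (\<gamma> / 2) * V1 \<gamma> = sqrt (2*\<gamma>)/(\<gamma>+1)"
  proof -
    have "sqrt (\<gamma>/2) * 2 = sqrt (\<gamma>/2) * sqrt 4" by simp
    also have "\<dots> = sqrt (\<gamma>/2*4)" by (rule real_sqrt_mult[symmetric])
    also have "\<gamma>/2*4 = 2*\<gamma>" by simp
    finally have "sqrt (\<gamma>/2) * 2 = sqrt (2*\<gamma>)" .
    thus ?thesis unfolding V1_def by (simp add: field_simps)
  qed
  have c1def: "C1 \<gamma> = sqrt (2*\<gamma>*(\<gamma>-1))/(\<gamma>+1)" unfolding C1_def ..
  have le: "2*\<gamma> \<le> 2*\<gamma>*(\<gamma>-1)" using g by simp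
  have P2: "C1 \<gamma> \<ge> - sqrt (\<gamma> / 2) * V1 \<gamma>" unfolding e1 c1def
    using le g by (intro divide_right_mono) auto
  have P3: "C1 \<gamma> = - sqrt (\<gamma> / 2) * V1 \<gamma> \<longleftrightarrow> \<gamma> = 2"
  proof
    assume "C1 \<gamma> = - sqrt (\<gamma> / 2) * V1 \<gamma>"
    hence "sqrt (2*\<gamma>*(\<gamma>-1)) = sqrt (2*\<gamma>)" unfolding e1 c1def using g by (simp add: divide_cancel_right)
    hence "2*\<gamma>*(\<gamma>-1) = 2*\<gamma>" by simp
    thus "\<gamma> = 2" using g by simp
  next
    assume "\<gamma> = 2"
    thus "C1 \<gamma> = - sqrt (\<gamma> / 2) * V1 \<gamma>" unfolding e1 c1def by simp
  qed
  define H where "H = (\<lambda>V. C V + k*V)"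
  have sol: "C a = C1 \<gamma>" "\<And>V. V \<in> {a..<b} \<Longrightarrow>
      (C has_real_derivative (Ff (real m) V (C V) \<gamma> z / Gf (real m) V (C V) \<gamma> z)) (at V within {a..<b})"
    using assms(6) unfolding is_sol_def a_def b_def by auto
  have Hd: "\<And>V. V \<in> {a..<b} \<Longrightarrow>
      (H has_real_derivative (Ff (real m) V (C V) \<gamma> z / Gf (real m) V (C V) \<gamma> z + k)) (at V within {a..<b})"
    unfolding H_def by (rule derivative_eq_intros sol(2) | simp)+
  have Hpos: "\<And>V. V \<in> {a..<b} \<Longrightarrow> H V = 0 \<Longrightarrow> Ff (real m) V (C V) \<gamma> z / Gf (real m) V (C V) \<gamma> z + k > 0"
  proof -
    fix V assume V: "V \<in> {a..<b}" "H V = 0"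
    hence CV: "C V = -k*V" unfolding H_def by simp
    have "-2/(\<gamma>+1) \<le> V" "V < -c/k" using V ad bcd by auto
    thus "Ff (real m) V (C V) \<gamma> z / Gf (real m) V (C V) \<gamma> z + k > 0" unfolding CV
      using keyline[OF g zz(1) z8 mm k1 k2 gk c1 c2 c3] by blast
  qed
  have Hcont: "continuous_on {a..<b} H"
    using Hd by (meson DERIV_continuous continuous_on_eq_continuous_within)
  have Ha: "H a \<ge> 0" unfolding H_def sol(1) using P2 unfolding a_def sg2 by simp
  have P1: "\<forall>V \<in> {a<..<b}. H V > 0"
  proof (rule ballI, rule ccontr)
    fix V assume V: "V \<in> {a<..<b}" and nH: "\<not> H V > 0"
    have ab: "a < b" using V by simp
    obtain \<delta> where \<delta>: "\<delta> > 0" "\<And>t. a < t \<Longrightarrow> t < a + \<delta> \<Longrightarrow> t < b \<Longrightarrow> H t > 0"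
    proof (cases "H a > 0")
      case True
      have "continuous (at a within {a..<b}) H" using Hcont ab
        by (simp add: continuous_on_eq_continuous_within)
      hence "(H \<longlongrightarrow> H a) (at a within {a..<b})" by (simp add: continuous_within)
      hence "eventually (\<lambda>t. H t > 0) (at a within {a..<b})" using True by (rule order_tendstoD(1))
      then obtain d where d: "d > 0" "\<And>t. t \<in> {a..<b} \<Longrightarrow> t \<noteq> a \<Longrightarrow> dist t a < d \<Longrightarrow> H t > 0"
        unfolding eventually_at by blast
      show ?thesis
      proof (rule that[OF d(1)])
        fix t assume "a < t" "t < a + d" "t < b"
        thus "H t > 0" using d(2)[of t] by (simp add: dist_real_def)
      qed
    next
      case False
      hence H0: "H a = 0" using Ha by simp
      have "a \<in> {a..<b}" using ab by simp
      hence "(H has_real_derivative (Ff (real m) a (C a) \<gamma> z / Gf (real m) a (C a) \<gamma> z + k)) (at a within {a..<b})"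
        and "Ff (real m) a (C a) \<gamma> z / Gf (real m) a (C a) \<gamma> z + k > 0" using Hd Hpos H0 by auto
      from has_real_derivative_pos_inc_right[OF this]
      obtain d where d: "d > 0" "\<And>h. h > 0 \<Longrightarrow> a + h \<in> {a..<b} \<Longrightarrow> h < d \<Longrightarrow> H a < H (a + h)" by blast
      show ?thesis
      proof (rule that[OF d(1)])
        fix t assume "a < t" "t < a + d" "t < b"
        thus "H t > 0" using d(2)[of "t - a"] H0 by simp
      qed
    qed
    define \<delta>' where "\<delta>' = min \<delta> (V - a)"
    define p where "p = a + \<delta>'/2"
    have d1: "0 < \<delta>'" "\<delta>' \<le> V - a" "\<delta>' \<le> \<delta>" unfolding \<delta>'_def using \<delta>(1) V by auto
    have p: "a < p" "p < V" "p < a + \<delta>" unfolding p_def using d1 by linarith+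
    have Hp: "H p > 0" using \<delta>(2)[of p] p V by auto
    define S where "S = {t \<in> {p..V}. H t \<le> (\<lambda>_. 0) t}"
    have cpV: "continuous_on {p..V} H" by (rule continuous_on_subset[OF Hcont]) (use p V in auto)
    have Scl: "closed S" unfolding S_def
      by (rule continuous_on_closed_Collect_le[OF cpV continuous_on_const closed_atLeastAtMost])
    have VS: "V \<in> S" unfolding S_def using nH p by auto
    have Sbd: "bdd_below S" unfolding S_def by (rule bdd_belowI[of _ p]) auto
    define t0 where "t0 = Inf S"
    have t0S: "t0 \<in> S" unfolding t0_def using closed_contains_Inf[OF _ Sbd Scl] VS by auto
    have t0: "p \<le> t0" "t0 \<le> V" "H t0 \<le> 0" using t0S unfolding S_def by auto
    have below: "\<And>t. p \<le> t \<Longrightarrow> t < t0 \<Longrightarrow> H t > 0"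
    proof (rule ccontr)
      fix t assume t: "p \<le> t" "t < t0" "\<not> H t > 0"
      hence "t \<in> S" unfolding S_def using t0 by auto
      hence "t0 \<le> t" unfolding t0_def using Sbd by (rule cInf_lower)
      thus False using t by simp
    qed
    have Ht0: "H t0 = 0"
    proof -
      have "continuous_on {p..t0} H" by (rule continuous_on_subset[OF cpV]) (use t0 in auto)
      then obtain x where x: "p \<le> x" "x \<le> t0" "H x = 0" using IVT2'[of H t0 0 p] t0 Hp by auto
      have "x \<in> S" unfolding S_def using x t0 by auto
      hence "t0 \<le> x" unfolding t0_def using Sbd by (rule cInf_lower)
      thus ?thesis using x by simp
    qed
    have t0ab: "t0 \<in> {a..<b}" using t0 p V by auto
    have "(H has_real_derivative (Ff (real m) t0 (C t0) \<gamma> z / Gf (real m) t0 (C t0) \<gamma> z + k)) (at t0 within {a..<b})"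
      and "Ff (real m) t0 (C t0) \<gamma> z / Gf (real m) t0 (C t0) \<gamma> z + k > 0" using Hd Hpos t0ab Ht0 by auto
    from has_real_derivative_pos_inc_left[OF this]
    obtain d where d: "d > 0" "\<And>h. h > 0 \<Longrightarrow> t0 - h \<in> {a..<b} \<Longrightarrow> h < d \<Longrightarrow> H (t0 - h) < H t0" by blast
    have t0p: "p < t0" using t0 Hp Ht0 by (cases "p = t0") auto
    define h where "h = min (d/2) ((t0 - p)/2)"
    have h1: "h > 0" unfolding h_def using d(1) t0p by simp
    have h2: "h \<le> d/2" unfolding h_def by (rule min.cobounded1)
    have h3: "h \<le> (t0 - p)/2" unfolding h_def by (rule min.cobounded2)
    have ha: "h < d" using h2 d(1) by linarith
    have hb: "p \<le> t0 - h" using h3 t0p by argo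
    have hc: "t0 - h < t0" using h1 by linarith
    note h = h1 ha hb hc
    have "H (t0 - h) < 0" using d(2)[of h] h t0ab p Ht0 by auto
    moreover have "H (t0 - h) > 0" using below h by auto
    ultimately show False by simp
  qed
  have "\<forall>V \<in> {V1 \<gamma> <..< - sqrt (2 / \<gamma>) * C8 \<gamma> z}. C V > - sqrt (\<gamma> / 2) * V"
    using P1 unfolding a_def[symmetric] b_def[symmetric] H_def sg2 by auto
  thus ?thesis using P2 P3 by blast
qed
end
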